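(* The conditional operation is not smooth in the variety of conditional algebras: there exist a conditional algebra $\langle A,\to\rangle$ and sets $U,V\subseteq\mathrm{Ul}(A)$ such that $U\to^{\sigma}V\neq U\to^{\pi}V$.
   Context: A conditional algebra is a pair $\langle A,\to\rangle$ where $A$ is a Boolean algebra and $\to$ is a binary operation on $A$ such that for all $a,b,c$: $a\to 1=1$; $(a\to b)\wedge(a\to c)=a\to(b\wedge c)$; $(a\vee b)\to c\le (a\to c)\wedge(b\to c)$. $\mathrm{Ul}(A)$ carries the Stone topology with basic clopens $\varphi(a)=\{u:a\in u\}$. For $U,V\subseteq\mathrm{Ul}(A)$: the $\pi$-extension is $U\to^{\pi}V=\bigcap_{(Y,O)}\bigcup\{\varphi(a\to b): Y\subseteq\varphi(a),\ \varphi(b)\subseteq O\}$ over closed $Y\subseteq U$ and open $O\supseteq V$; the $\sigma$-extension is $U\to^{\sigma}V=\bigcup_{(O,Y)}\bigcap\{\varphi(a\to b): \varphi(a)\subseteq O,\ Y\subseteq\varphi(b)\}$ over open $O\supseteq U$ and closed $Y\subseteq V$. The operation is smooth if these always coincide. *)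

theory Defs
  imports Main
begin

record 'a balg =
  carrier :: "'a set"
  meet :: "'a \<Rightarrow> 'a \<Rightarrow> 'a"
  join :: "'a \<Rightarrow> 'a \<Rightarrow> 'a"
  cmpl :: "'a \<Rightarrow> 'a"
  bot :: 'a
  top :: 'a

definition boolean_algebra :: "'a balg \<Rightarrow> bool" where
  "boolean_algebra B \<longleftrightarrow>
     bot B \<in> carrier B \<and> top B \<in> carrier B \<and>
     (\<forall>a\<in>carrier B. cmpl B a \<in> carrier B) \<and>
     (\<forall>a\<in>carrier B. \<forall>b\<in>carrier B. meet B a b \<in> carrier B \<and> join B a b \<in> carrier B) \<and>
     (\<forall>a\<in>carrier B. \<forall>b\<in>carrier B.
        meet B a b = meet B b a \<and> join B a b = join B b a \<and>
        meet B a (join B a b) = a \<and> join B a (meet B a b) = a) \<and>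
     (\<forall>a\<in>carrier B. \<forall>b\<in>carrier B. \<forall>c\<in>carrier B.
        meet B a (meet B b c) = meet B (meet B a b) c \<and>
        join B a (join B b c) = join B (join B a b) c \<and>
        meet B a (join B b c) = join B (meet B a b) (meet B a c)) \<and>
     (\<forall>a\<in>carrier B. meet B a (cmpl B a) = bot B \<and> join B a (cmpl B a) = top B \<and>
        join B a (bot B) = a \<and> meet B a (top B) = a)"

definition ble :: "'a balg \<Rightarrow> 'a \<Rightarrow> 'a \<Rightarrow> bool" where
  "ble B a b \<longleftrightarrow> meet B a b = a"

definition conditional_algebra :: "'a balg \<Rightarrow> ('a \<Rightarrow> 'a \<Rightarrow> 'a) \<Rightarrow> bool" where
  "conditional_algebra B imp \<longleftrightarrow>
     boolean_algebra B \<and>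
     (\<forall>a\<in>carrier B. \<forall>b\<in>carrier B. imp a b \<in> carrier B) \<and>
     (\<forall>a\<in>carrier B. imp a (top B) = top B) \<and>
     (\<forall>a\<in>carrier B. \<forall>b\<in>carrier B. \<forall>c\<in>carrier B.
        meet B (imp a b) (imp a c) = imp a (meet B b c)) \<and>
     (\<forall>a\<in>carrier B. \<forall>b\<in>carrier B. \<forall>c\<in>carrier B.
        ble B (imp (join B a b) c) (meet B (imp a c) (imp b c)))"

definition ultrafilter :: "'a balg \<Rightarrow> 'a set \<Rightarrow> bool" where
  "ultrafilter B u \<longleftrightarrow>
     u \<subseteq> carrier B \<and> top B \<in> u \<and> bot B \<notin> u \<and>
     (\<forall>a\<in>u. \<forall>b\<in>u. meet B a b \<in> u) \<and>
     (\<forall>a\<in>u. \<forall>b\<in>carrier B. ble B a b \<longrightarrow> b \<in> u) \<and>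
     (\<forall>a\<in>carrier B. a \<in> u \<or> cmpl B a \<in> u)"

definition Ul :: "'a balg \<Rightarrow> 'a set set" where
  "Ul B = {u. ultrafilter B u}"

definition phi :: "'a balg \<Rightarrow> 'a \<Rightarrow> 'a set set" where
  "phi B a = {u \<in> Ul B. a \<in> u}"

definition stone_open :: "'a balg \<Rightarrow> 'a set set \<Rightarrow> bool" where
  "stone_open B W \<longleftrightarrow> W \<subseteq> Ul B \<and> (\<forall>u\<in>W. \<exists>a\<in>carrier B. u \<in> phi B a \<and> phi B a \<subseteq> W)"

definition stone_closed :: "'a balg \<Rightarrow> 'a set set \<Rightarrow> bool" where
  "stone_closed B Y \<longleftrightarrow> Y \<subseteq> Ul B \<and> stone_open B (Ul B - Y)"

definition pi_ext :: "'a balg \<Rightarrow> ('a \<Rightarrow> 'a \<Rightarrow> 'a) \<Rightarrow> 'a set set \<Rightarrow> 'a set set \<Rightarrow> 'a set set" where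
  "pi_ext B imp U V =
     (\<Inter>{\<Union>{phi B (imp a b) | a b. a \<in> carrier B \<and> b \<in> carrier B \<and> Y \<subseteq> phi B a \<and> phi B b \<subseteq> W}
        | Y W. stone_closed B Y \<and> Y \<subseteq> U \<and> stone_open B W \<and> V \<subseteq> W})"

definition sigma_ext :: "'a balg \<Rightarrow> ('a \<Rightarrow> 'a \<Rightarrow> 'a) \<Rightarrow> 'a set set \<Rightarrow> 'a set set \<Rightarrow> 'a set set" where
  "sigma_ext B imp U V =
     (\<Union>{\<Inter>{phi B (imp a b) | a b. a \<in> carrier B \<and> b \<in> carrier B \<and> phi B a \<subseteq> W \<and> Y \<subseteq> phi B b}
        | W Y. stone_open B W \<and> U \<subseteq> W \<and> stone_closed B Y \<and> Y \<subseteq> V})"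

end

theory Submission
  imports Defs
begin

definition BB :: "nat set balg" where
  "BB = \<lparr>carrier = {a. finite a \<or> finite (- a)}, meet = (\<inter>), join = (\<union>),
         cmpl = uminus, bot = {}, top = UNIV\<rparr>"

definition II :: "nat set \<Rightarrow> nat set \<Rightarrow> nat set" where
  "II a b = (if a \<subseteq> b then UNIV else {})"

definition uinf :: "nat set set" where
  "uinf = {a. finite (- a)}"

lemma BB_simps[simp]: "carrier BB = {a. finite a \<or> finite (- a)}" "meet BB = (\<inter>)"
  "join BB = (\<union>)" "cmpl BB = uminus" "bot BB = {}" "top BB = UNIV"
  by (simp_all add: BB_def)

lemma ba: "boolean_algebra BB"
  unfolding boolean_algebra_def BB_simps
  apply (intro conjI ballI)
  apply simp_all
  apply (auto simp: Compl_Int Compl_Un)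
  done

lemma ca: "conditional_algebra BB II"
  unfolding conditional_algebra_def
  apply (intro conjI ba)
     apply (simp add: II_def)
    apply (simp add: II_def)
   apply (simp add: II_def)
  apply (simp add: II_def ble_def)
  done

lemma uinf_ul: "uinf \<in> Ul BB"
  unfolding Ul_def ultrafilter_def uinf_def ble_def
  apply (auto simp: Compl_Int dest: finite_subset)
  apply (metis Compl_partition finite_Un finite_subset infinite_UNIV_nat le_iff_inf)
  done

lemma pi_in: "uinf \<in> pi_ext BB II {uinf} {uinf}"
  unfolding pi_ext_def
proof (rule InterI)
  fix S assume "S \<in> {\<Union>{phi BB (II a b) | a b. a \<in> carrier BB \<and> b \<in> carrier BB \<and> Y \<subseteq> phi BB a \<and> phi BB b \<subseteq> W}
        | Y W. stone_closed BB Y \<and> Y \<subseteq> {uinf} \<and> stone_open BB W \<and> {uinf} \<subseteq> W}"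
  then obtain Y W where S: "S = \<Union>{phi BB (II a b) | a b. a \<in> carrier BB \<and> b \<in> carrier BB \<and> Y \<subseteq> phi BB a \<and> phi BB b \<subseteq> W}"
    and Y: "Y \<subseteq> {uinf}" and W: "stone_open BB W" "uinf \<in> W"
    by blast
  from W obtain c where c: "c \<in> carrier BB" "uinf \<in> phi BB c" "phi BB c \<subseteq> W"
    using bspec[OF conjunct2[OF W(1)[unfolded stone_open_def]] W(2)] by (elim bexE conjE)
  have "Y \<subseteq> phi BB c" using Y c(2) by blast
  then have "phi BB (II c c) \<in> {phi BB (II a b) | a b. a \<in> carrier BB \<and> b \<in> carrier BB \<and> Y \<subseteq> phi BB a \<and> phi BB b \<subseteq> W}"
    using c by blast
  moreover have "uinf \<in> phi BB (II c c)" using uinf_ul unfolding phi_def II_def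
    by (simp add: uinf_def)
  ultimately show "uinf \<in> S" unfolding S by blast
qed

lemma sigma_empty: "sigma_ext BB II {uinf} {uinf} = {}"
proof (rule equals0I)
  fix u assume "u \<in> sigma_ext BB II {uinf} {uinf}"
  then obtain W Y where W: "stone_open BB W" "uinf \<in> W" and Y: "stone_closed BB Y" "Y \<subseteq> {uinf}"
    and u: "u \<in> \<Inter>{phi BB (II a b) | a b. a \<in> carrier BB \<and> b \<in> carrier BB
        \<and> phi BB a \<subseteq> W \<and> Y \<subseteq> phi BB b}"
  proof -
    from \<open>u \<in> sigma_ext BB II {uinf} {uinf}\<close> obtain S where
      S1: "S \<in> {\<Inter>{phi BB (II a b) | a b. a \<in> carrier BB \<and> b \<in> carrier BB \<and> phi BB a \<subseteq> W \<and> Y \<subseteq> phi BB b}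
        | W Y. stone_open BB W \<and> {uinf} \<subseteq> W \<and> stone_closed BB Y \<and> Y \<subseteq> {uinf}}" and S2: "u \<in> S"
      unfolding sigma_ext_def by (rule UnionE)
    from S1 obtain W Y where "S = \<Inter>{phi BB (II a b) | a b. a \<in> carrier BB \<and> b \<in> carrier BB \<and> phi BB a \<subseteq> W \<and> Y \<subseteq> phi BB b}"
      "stone_open BB W" "{uinf} \<subseteq> W" "stone_closed BB Y" "Y \<subseteq> {uinf}"
      by (elim CollectE exE conjE)
    then show ?thesis using S2 that by simp
  qed
  then obtain c where c: "c \<in> carrier BB" "uinf \<in> phi BB c" "phi BB c \<subseteq> W"
    using bspec[OF conjunct2[OF W(1)[unfolded stone_open_def]] W(2)] by (elim bexE conjE)
  have fc: "finite (- c)" using c(2) unfolding phi_def uinf_def by auto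
  then have "c \<noteq> {}" by auto
  then obtain n where n: "n \<in> c" by auto
  define b where "b = c - {n}"
  have "- b = insert n (- c)" unfolding b_def by auto
  then have fb: "finite (- b)" using fc by simp
  have bc: "b \<in> carrier BB" using fb by simp
  have "uinf \<in> phi BB b" using uinf_ul fb unfolding phi_def uinf_def by auto
  then have "Y \<subseteq> phi BB b" using Y by auto
  then have "u \<in> phi BB (II c b)" using u c bc by blast
  moreover have "II c b = {}" using n unfolding II_def b_def by auto
  ultimately have "u \<in> Ul BB" "{} \<in> u" unfolding phi_def by auto
  then have "ultrafilter BB u" "bot BB \<in> u" unfolding Ul_def by auto
  then show False unfolding ultrafilter_def by blast
qed

theorem theorem2p17:
  shows "\<exists>(B :: nat set balg) imp U V.
           conditional_algebra B imp \<and> U \<subseteq> Ul B \<and> V \<subseteq> Ul B \<and>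
           sigma_ext B imp U V \<noteq> pi_ext B imp U V"
proof (intro exI conjI)
  show "conditional_algebra BB II" by (rule ca)
  show "{uinf} \<subseteq> Ul BB" using uinf_ul by simp
  show "{uinf} \<subseteq> Ul BB" using uinf_ul by simp
  show "sigma_ext BB II {uinf} {uinf} \<noteq> pi_ext BB II {uinf} {uinf}"
    using pi_in sigma_empty by auto
qed

end
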